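(* Let $N$ be a positive integer, $t$ a nonnegative integer with $2t<N$, and $\epsilon_s>0$. Let $\mathcal A=\{x_1\le x_2\le\cdots\le x_N\}$ be $N$ real data points in an interval $[x_L,x_U]$, with $R=x_U-x_L$, and suppose the $N-2t$ centermost data points cover a range of length at least $d$, where $0<d<R$. Generate a split point $r\in[x_L,x_U]$ by the exponential mechanism with density (with respect to Lebesgue measure on $[x_L,x_U]$) proportional to $\exp\{\epsilon_s q(r)/2\}$, where $$q(r)=-\Big|\,|\mathcal A\cap[x_L,r)|-|\mathcal A\cap[r,x_U]|\,\Big|,$$ and split $\mathcal A$ into the blocks $\mathcal A\cap[x_L,r)$ and $\mathcal A\cap[r,x_U]$. Then the smaller of the two resulting blocks contains at least $t$ data points with probability at least $$\frac{d}{Re^{-\epsilon_s}+d(1-e^{-\epsilon_s})}.$$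
   Context: This randomized choice of $r$ is an $\epsilon_s$-differentially private version of splitting at the median (the score $q$ has sensitivity $1$). *)

theory Defs
  imports "HOL-Analysis.Analysis"
begin

text \<open>Data points are x 0, ..., x (N-1) (a multiset of reals, counted with multiplicity).
  Block sizes |A \<inter> [xL, r)| and |A \<inter> [r, xU]|.\<close>

definition left_count :: "(nat \<Rightarrow> real) \<Rightarrow> nat \<Rightarrow> real \<Rightarrow> real \<Rightarrow> nat" where
  "left_count x N xL r = card {i \<in> {..<N}. xL \<le> x i \<and> x i < r}"

definition right_count :: "(nat \<Rightarrow> real) \<Rightarrow> nat \<Rightarrow> real \<Rightarrow> real \<Rightarrow> nat" where
  "right_count x N xU r = card {i \<in> {..<N}. r \<le> x i \<and> x i \<le> xU}"

definition split_score :: "(nat \<Rightarrow> real) \<Rightarrow> nat \<Rightarrow> real \<Rightarrow> real \<Rightarrow> real \<Rightarrow> real" where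
  "split_score x N xL xU r =
     - \<bar>real (left_count x N xL r) - real (right_count x N xU r)\<bar>"

definition mech_weight :: "real \<Rightarrow> (nat \<Rightarrow> real) \<Rightarrow> nat \<Rightarrow> real \<Rightarrow> real \<Rightarrow> real \<Rightarrow> real" where
  "mech_weight eps x N xL xU r = exp (eps * split_score x N xL xU r / 2)"

definition mech_prob ::
  "real \<Rightarrow> (nat \<Rightarrow> real) \<Rightarrow> nat \<Rightarrow> real \<Rightarrow> real \<Rightarrow> (real \<Rightarrow> bool) \<Rightarrow> real" where
  "mech_prob eps x N xL xU P =
     (LINT r : {xL..xU} \<inter> {r. P r} | lborel. mech_weight eps x N xL xU r) /
     (LINT r : {xL..xU} | lborel. mech_weight eps x N xL xU r)"

end

theory Submission
  imports Defs
begin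

lemma real_card_filter:
  fixes N :: nat
  shows "real (card {i \<in> {..<N}. P i}) = (\<Sum>i<N. if P i then 1 else 0)"
proof -
  have "(\<Sum>i\<in>{i\<in>{..<N}. P i}. (1::real)) = (\<Sum>i<N. if P i then 1 else 0)"
    by (rule sum.inter_filter) (rule finite_lessThan)
  then show ?thesis by (simp add: \<open>_ = _\<close>[symmetric])
qed

lemma left_meas: "(\<lambda>r. real (left_count x N xL r)) \<in> borel_measurable borel"
  unfolding left_count_def real_card_filter by measurable

lemma right_meas: "(\<lambda>r. real (right_count x N xU r)) \<in> borel_measurable borel"
  unfolding right_count_def real_card_filter by measurable

lemma weight_meas: "mech_weight eps x N xL xU \<in> borel_measurable borel"
  unfolding mech_weight_def split_score_def
  using left_meas[of x N xL] right_meas[of x N xU] by measurable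

theorem mainTheorem3:
  fixes N t :: nat and eps xL xU R d :: real and x :: "nat \<Rightarrow> real"
  assumes "N > 0" and "2 * t < N" and "eps > 0"
    and sorted: "\<And>i j. i \<le> j \<Longrightarrow> j < N \<Longrightarrow> x i \<le> x j"
    and range: "\<And>i. i < N \<Longrightarrow> xL \<le> x i \<and> x i \<le> xU"
    and "R = xU - xL"
    and "0 < d" and "d < R"
    and center: "x (N - 1 - t) - x t \<ge> d"
  shows "mech_prob eps x N xL xU
           (\<lambda>r. min (left_count x N xL r) (right_count x N xU r) \<ge> t)
         \<ge> d / (R * exp (- eps) + d * (1 - exp (- eps)))"
proof -
  define w where "w = mech_weight eps x N xL xU"
  define L where "L = (\<lambda>r. left_count x N xL r)"
  define Rc where "Rc = (\<lambda>r. right_count x N xU r)"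
  define I where "I = {xL..xU}"
  define S where "S = I \<inter> {r. t \<le> min (L r) (Rc r)}"
  define B where "B = I - S"
  define m where "m = exp (- eps * (real N - 2 * real t) / 2)"
  define e where "e = exp (- eps)"
  have wm: "w \<in> borel_measurable borel" unfolding w_def by (rule weight_meas)
  have w_pos: "w r > 0" for r unfolding w_def mech_weight_def by simp
  have LRc: "real (Rc r) = real N - real (L r)" if "r \<in> I" for r
  proof -
    have "{i \<in> {..<N}. r \<le> x i \<and> x i \<le> xU} = {..<N} - {i \<in> {..<N}. xL \<le> x i \<and> x i < r}"
      using range by force
    hence "Rc r = N - L r" unfolding Rc_def L_def right_count_def left_count_def
      by (simp, subst card_Diff_subset) auto
    moreover have "L r \<le> N" unfolding L_def left_count_def
      by (metis (no_types, lifting) card_lessThan card_mono finite_lessThan mem_Collect_eq subsetI)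
    ultimately show ?thesis by simp
  qed
  have wS: "w r \<ge> m" if "r \<in> S" for r
  proof -
    have r: "r \<in> I" "t \<le> L r" "t \<le> Rc r" using that unfolding S_def by auto
    have "\<bar>real (L r) - real (Rc r)\<bar> \<le> real N - 2 * real t"
      using r LRc[OF r(1)] by linarith
    hence "eps * split_score x N xL xU r / 2 \<ge> - eps * (real N - 2 * real t) / 2"
      unfolding split_score_def L_def Rc_def using \<open>eps > 0\<close>
      by (simp add: divide_right_mono mult_left_mono)
    thus ?thesis unfolding w_def mech_weight_def m_def by simp
  qed
  have wB: "w r \<le> m * e" if "r \<in> B" for r
  proof -
    have r: "r \<in> I" "\<not> (t \<le> L r \<and> t \<le> Rc r)" using that unfolding B_def S_def by auto
    have "\<bar>real (L r) - real (Rc r)\<bar> \<ge> real N - 2 * real t + 2"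
      using r LRc[OF r(1)] by linarith
    hence "eps * split_score x N xL xU r / 2 \<le> - eps * (real N - 2 * real t + 2) / 2"
      unfolding split_score_def L_def Rc_def using \<open>eps > 0\<close>
      by (simp add: divide_right_mono mult_left_mono)
    hence "w r \<le> exp (- eps * (real N - 2 * real t + 2) / 2)"
      unfolding w_def mech_weight_def by simp
    also have "\<dots> = exp (- eps * (real N - 2 * real t) / 2 + - eps)"
      by (rule arg_cong[where f=exp]) (simp add: field_simps)
    also have "\<dots> = m * e" unfolding m_def e_def by (simp only: exp_add)
    finally show ?thesis .
  qed
  have Smeas: "S \<in> sets lborel"
  proof -
    have "S = {r \<in> space borel. r \<in> I \<and> real t \<le> real (L r) \<and> real t \<le> real (Rc r)}"
      unfolding S_def by auto
    also have "\<dots> \<in> sets borel" unfolding I_def L_def Rc_def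
      using left_meas[of x N xL] right_meas[of x N xU] by measurable
    finally show ?thesis by simp
  qed
  have Imeas: "I \<in> sets lborel" unfolding I_def by simp
  have Bmeas: "B \<in> sets lborel" unfolding B_def using Smeas Imeas by auto
  have SI: "S \<subseteq> I" "B \<subseteq> I" "S \<inter> B = {}" "I = S \<union> B" unfolding S_def B_def by auto
  have intI1: "set_integrable lborel I (\<lambda>_. 1::real)" unfolding I_def
    by (rule borel_integrable_atLeastAtMost') auto
  have intIw: "set_integrable lborel I w"
  proof (rule set_integrable_bound[OF intI1])
    show "set_borel_measurable lborel I w" unfolding set_borel_measurable_def
      using wm Imeas by (auto intro!: borel_measurable_scaleR borel_measurable_indicator)
    have "w r \<le> 1" for r unfolding w_def mech_weight_def split_score_def using \<open>eps > 0\<close> by simp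
    thus "AE r in lborel. r \<in> I \<longrightarrow> norm (w r) \<le> norm (1::real)"
      using w_pos by (simp add: less_imp_le)
  qed
  have intS: "set_integrable lborel S w" by (rule set_integrable_subset[OF intIw Smeas SI(1)])
  have intB: "set_integrable lborel B w" by (rule set_integrable_subset[OF intIw Bmeas SI(2)])
  have intSc: "set_integrable lborel S (\<lambda>_. c)" for c :: real
    by (rule set_integrable_subset[OF _ Smeas SI(1)], unfold I_def, rule borel_integrable_atLeastAtMost') auto
  have intBc: "set_integrable lborel B (\<lambda>_. c)" for c :: real
    by (rule set_integrable_subset[OF _ Bmeas SI(2)], unfold I_def, rule borel_integrable_atLeastAtMost') auto
  have finS: "emeasure lborel S \<noteq> \<infinity>"
  proof -
    have "emeasure lborel S \<le> emeasure lborel I" by (rule emeasure_mono[OF SI(1) Imeas])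
    moreover have "emeasure lborel I < \<infinity>" unfolding I_def by (simp add: emeasure_lborel_Icc_eq)
    ultimately show ?thesis by (simp add: top.not_eq_extremum order_le_less_trans)
  qed
  have finB: "emeasure lborel B \<noteq> \<infinity>"
  proof -
    have "emeasure lborel B \<le> emeasure lborel I" by (rule emeasure_mono[OF SI(2) Imeas])
    moreover have "emeasure lborel I < \<infinity>" unfolding I_def by (simp add: emeasure_lborel_Icc_eq)
    ultimately show ?thesis by (simp add: top.not_eq_extremum order_le_less_trans)
  qed
  define g where "g = measure lborel S"
  have gB: "measure lborel B = R - g"
  proof -
    have "measure lborel I = measure lborel S + measure lborel B"
      using SI Smeas Bmeas finS finB by (simp add: measure_Union)
    moreover have "measure lborel I = R" unfolding I_def using assms by simp
    ultimately show ?thesis unfolding g_def by simp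
  qed
  have gd: "g \<ge> d"
  proof -
    have sub: "{x t<..x (N - 1 - t)} \<subseteq> S"
    proof
      fix r assume r: "r \<in> {x t<..x (N - 1 - t)}"
      have tN: "t < N" "N - 1 - t < N" using assms by auto
      have rI: "r \<in> I" unfolding I_def using r range[OF tN(1)] range[OF tN(2)] by auto
      have subt: "{..t} \<subseteq> {i \<in> {..<N}. xL \<le> x i \<and> x i < r}"
      proof
        fix i assume "i \<in> {..t}"
        hence i: "i \<le> t" "i < N" using tN by auto
        show "i \<in> {i \<in> {..<N}. xL \<le> x i \<and> x i < r}"
          using range[OF i(2)] sorted[OF i(1) tN(1)] i r by auto
      qed
      hence "t + 1 \<le> L r" unfolding L_def left_count_def
        using card_mono[OF _ subt] by simp
      moreover have "{N - 1 - t..<N} \<subseteq> {i \<in> {..<N}. r \<le> x i \<and> x i \<le> xU}"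
      proof
        fix i assume "i \<in> {N - 1 - t..<N}"
        hence i: "N - 1 - t \<le> i" "i < N" by auto
        show "i \<in> {i \<in> {..<N}. r \<le> x i \<and> x i \<le> xU}"
          using range[OF i(2)] sorted[OF i(1) i(2)] i r by auto
      qed
      hence "t + 1 \<le> Rc r" unfolding Rc_def right_count_def
        using card_mono[of "{i \<in> {..<N}. r \<le> x i \<and> x i \<le> xU}" "{N - 1 - t..<N}"] tN by auto
      ultimately show "r \<in> S" unfolding S_def using rI by auto
    qed
    have "measure lborel {x t<..x (N - 1 - t)} \<le> measure lborel S"
      by (rule measure_mono_fmeasurable[OF sub]) (use Smeas finS in \<open>auto simp: fmeasurable_def top.not_eq_extremum\<close>)
    thus ?thesis using center assms unfolding g_def by simp
  qed
  have IS: "(LINT r:S|lborel. w r) \<ge> g * m"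
  proof -
    have "(LINT r:S|lborel. m) \<le> (LINT r:S|lborel. w r)"
      by (rule set_integral_mono[OF intSc intS wS])
    thus ?thesis using set_integral_const[OF Smeas finS, of m] unfolding g_def by simp
  qed
  have IB: "(LINT r:B|lborel. w r) \<le> (R - g) * (m * e)"
  proof -
    have "(LINT r:B|lborel. w r) \<le> (LINT r:B|lborel. m * e)"
      by (rule set_integral_mono[OF intB intBc wB])
    moreover have "(LINT r:B|lborel. m * e) = (R - g) * (m * e)"
      using set_integral_const[OF Bmeas finB, of "m * e"] gB by (simp only: real_scaleR_def)
    ultimately show ?thesis by linarith
  qed
  have split: "(LINT r:I|lborel. w r) = (LINT r:S|lborel. w r) + (LINT r:B|lborel. w r)"
    using SI(4) set_integral_Un[OF SI(3) intS intB] by simp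
  have Sset: "{xL..xU} \<inter> {r. t \<le> min (left_count x N xL r) (right_count x N xU r)} = S"
    unfolding S_def I_def L_def Rc_def ..
  define a where "a = (LINT r:S|lborel. w r)"
  define b where "b = (LINT r:B|lborel. w r)"
  have m0: "m > 0" "e > 0" "e < 1" unfolding m_def e_def using assms by auto
  have "(LINT r:B|lborel. (0::real)) \<le> b" unfolding b_def
    by (rule set_integral_mono[OF intBc intB]) (simp add: w_pos less_imp_le)
  hence b0: "b \<ge> 0" by simp
  have a0: "a > 0" using IS gd assms m0 unfolding a_def
    by (smt (verit) mult_pos_pos)
  have key: "d * b \<le> a * (R - d) * e"
  proof -
    have "d * b \<le> d * ((R - g) * (m * e))" using IB assms unfolding b_def by simp
    also have "\<dots> \<le> g * m * (R - d) * e"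
    proof -
      have "d * (R - g) \<le> g * (R - d)" using gd assms by (simp add: algebra_simps mult_right_mono)
      hence "d * (R - g) * (m * e) \<le> g * (R - d) * (m * e)"
        using m0 by (intro mult_right_mono) auto
      thus ?thesis by (simp add: algebra_simps)
    qed
    also have "\<dots> \<le> a * (R - d) * e" using IS assms m0 unfolding a_def
      by (simp add: mult_right_mono)
    finally show ?thesis .
  qed
  have den: "R * exp (- eps) + d * (1 - exp (- eps)) = d + (R - d) * e"
    unfolding e_def by (simp add: algebra_simps)
  have "d / (d + (R - d) * e) \<le> a / (a + b)"
  proof -
    have D: "d + (R - d) * e > 0" using assms m0 by (intro add_pos_nonneg) auto
    have A: "a + b > 0" using a0 b0 by simp
    have "d * (a + b) \<le> a * (d + (R - d) * e)" using key by (simp add: algebra_simps)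
    hence "d * (a + b) / (d + (R - d) * e) \<le> a" by (simp add: pos_divide_le_eq[OF D])
    hence "d / (d + (R - d) * e) * (a + b) \<le> a" by simp
    thus ?thesis by (simp add: pos_le_divide_eq[OF A])
  qed
  thus ?thesis unfolding mech_prob_def Sset den a_def b_def
    using split unfolding w_def I_def by simp
qed

end
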